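(* Suppose there is a $\Lambda$-semibranching function system $\{\tau_\lambda, \tau^n\}$ on a measure space $(X, \mu)$, where $\Lambda$ is a row-finite source-free $k$-graph. If $A\subseteq X$ is invariant with respect to $\tau^n$ for all $n\in\mathbb{N}^k$, and $\mu(A \cap D_v)\neq 0$ for all $v\in\Lambda^0$, then the restriction of a $\Lambda$-projective system on $(X, \mu)$ to $(X, \mu_A)$ is again a $\Lambda$-projective system; that is, the same maps $\{\tau_\lambda,\tau^n\}$ form a $\Lambda$-semibranching function system on $(X,\mu_A)$, and if $\{f_\lambda\}$ are functions making $\{\tau_\lambda,\tau^n\}$ a $\Lambda$-projective system on $(X,\mu)$, then the restrictions $\{f_\lambda|_A\}$ make it a $\Lambda$-projective system on $(X,\mu_A)$.
   Context: A $k$-graph is a countable small category $\Lambda$ with a functor $d:\Lambda\to\mathbb{N}^k$ with unique factorization; vertices $\Lambda^0$, range/source $r,s$; row-finite/source-free: $v\Lambda^n$ finite/nonempty. A semibranching function system on $(X,\mu)$: measurable $D_i$ with $0<\mu(D_i)<\infty$, measurable $\sigma_i:D_i\to X$, $R_i=\sigma_i(D_i)$ with $\mu(X\setminus\bigcup_iR_i)=0$, $\mu(R_i\cap R_j)=0$ ($i\ne j$), $\mu(R_i)<\infty$, and $d(\mu\circ\sigma_i)/d\mu>0$ a.e. on $D_i$; coding map $\sigma$: $\sigma\circ\sigma_i=\mathrm{id}_{D_i}$. A $\Lambda$-semibranching function system: measurable $D_\lambda$, $\tau_\lambda:D_\lambda\to X$, $\tau^m:X\to X$ ($m\in\mathbb{N}^k$)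 with: for each $m$, $\{\tau_\lambda:d(\lambda)=m\}$ is a semibranching function system with coding map $\tau^m$; $\tau_v=\mathrm{id}$ for $v\in\Lambda^0$ (so $D_v=R_v$); $R_\lambda=\tau_\lambda(D_\lambda)$, and for $\nu\in s(\lambda)\Lambda$, $R_\nu\subseteq D_\lambda$ a.e. and $\tau_\lambda\tau_\nu=\tau_{\lambda\nu}$ a.e.; $\tau^m\tau^n=\tau^{m+n}$. A $\Lambda$-projective system is a $\Lambda$-semibranching function system plus functions $f_\lambda\in L^2(X,\mu)$ with $0\ne d(\mu\circ\tau_\lambda^{-1})/d\mu=|f_\lambda|^2$ and $f_\lambda(f_\nu\circ\tau^{d(\lambda)})=f_{\lambda\nu}$. A set $B$ is invariant with respect to $T:X\to X$ if $\mu(T^{-1}(B)\,\Delta\,B)=0$. $\mu_A(B)=\mu(B\cap A)$, with $\mu_A$-measurable sets $\{B\cap A: B \text{ measurable}\}$. *)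

theory Defs
  imports "HOL-Analysis.Analysis"
begin

text \<open>N^k, represented as functions nat \<Rightarrow> nat vanishing from index k on.\<close>
definition Nk :: "nat \<Rightarrow> (nat \<Rightarrow> nat) set" where
  "Nk k = {m. \<forall>i\<ge>k. m i = 0}"

definition addk :: "(nat \<Rightarrow> nat) \<Rightarrow> (nat \<Rightarrow> nat) \<Rightarrow> (nat \<Rightarrow> nat)" where
  "addk m n = (\<lambda>i. m i + n i)"

text \<open>A small category given by its morphisms, objects (identity morphisms),
  range, source, composition (cmp l n = l n, defined when src l = rng n) and degree functor.\<close>
record 'p kgraph =
  Mor :: "'p set"
  Obj :: "'p set"
  rng :: "'p \<Rightarrow> 'p"
  src :: "'p \<Rightarrow> 'p"
  cmp :: "'p \<Rightarrow> 'p \<Rightarrow> 'p"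
  deg :: "'p \<Rightarrow> nat \<Rightarrow> nat"

definition is_kgraph :: "nat \<Rightarrow> 'p kgraph \<Rightarrow> bool" where
  "is_kgraph k G \<longleftrightarrow>
     countable (Mor G) \<and> Obj G \<subseteq> Mor G \<and>
     (\<forall>l\<in>Mor G. rng G l \<in> Obj G \<and> src G l \<in> Obj G) \<and>
     (\<forall>v\<in>Obj G. rng G v = v \<and> src G v = v) \<and>
     (\<forall>l\<in>Mor G. \<forall>n\<in>Mor G. src G l = rng G n \<longrightarrow>
        cmp G l n \<in> Mor G \<and> rng G (cmp G l n) = rng G l \<and> src G (cmp G l n) = src G n) \<and>
     (\<forall>l\<in>Mor G. cmp G (rng G l) l = l \<and> cmp G l (src G l) = l) \<and>
     (\<forall>l\<in>Mor G. \<forall>n\<in>Mor G. \<forall>p\<in>Mor G. src G l = rng G n \<longrightarrow> src G n = rng G p \<longrightarrow>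
        cmp G (cmp G l n) p = cmp G l (cmp G n p)) \<and>
     (\<forall>l\<in>Mor G. deg G l \<in> Nk k) \<and>
     (\<forall>l\<in>Mor G. \<forall>n\<in>Mor G. src G l = rng G n \<longrightarrow>
        deg G (cmp G l n) = addk (deg G l) (deg G n)) \<and>
     (\<forall>l\<in>Mor G. \<forall>m\<in>Nk k. \<forall>n\<in>Nk k. deg G l = addk m n \<longrightarrow>
        (\<exists>!(a, b). a \<in> Mor G \<and> b \<in> Mor G \<and> src G a = rng G b \<and>
            deg G a = m \<and> deg G b = n \<and> l = cmp G a b))"

definition row_finite :: "nat \<Rightarrow> 'p kgraph \<Rightarrow> bool" where
  "row_finite k G \<longleftrightarrow> (\<forall>v\<in>Obj G. \<forall>n\<in>Nk k. finite {l\<in>Mor G. rng G l = v \<and> deg G l = n})"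

definition source_free :: "nat \<Rightarrow> 'p kgraph \<Rightarrow> bool" where
  "source_free k G \<longleftrightarrow> (\<forall>v\<in>Obj G. \<forall>n\<in>Nk k. {l\<in>Mor G. rng G l = v \<and> deg G l = n} \<noteq> {})"

text \<open>The Radon--Nikodym condition d(mu o sigma_i)/d mu > 0 a.e. on D_i is spelled out as the
  existence of a density g, positive a.e. on D_i, with mu(sigma_i B) = int_B g dmu for all
  measurable B \<subseteq> D_i.\<close>
definition sbfs :: "'x measure \<Rightarrow> 'i set \<Rightarrow> ('i \<Rightarrow> 'x set) \<Rightarrow> ('i \<Rightarrow> 'x \<Rightarrow> 'x) \<Rightarrow> ('x \<Rightarrow> 'x) \<Rightarrow> bool" where
  "sbfs M I D \<sigma> c \<longleftrightarrow>
     (\<forall>i\<in>I. D i \<in> sets M \<and> 0 < emeasure M (D i) \<and> emeasure M (D i) < \<infinity> \<and>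
        \<sigma> i \<in> measurable (restrict_space M (D i)) M \<and>
        (\<forall>B\<in>sets M. B \<subseteq> D i \<longrightarrow> \<sigma> i ` B \<in> sets M) \<and>
        emeasure M (\<sigma> i ` D i) < \<infinity> \<and>
        (\<exists>g\<in>borel_measurable M. (AE x in M. x \<in> D i \<longrightarrow> 0 < g x) \<and>
           (\<forall>B\<in>sets M. B \<subseteq> D i \<longrightarrow>
              emeasure M (\<sigma> i ` B) = (\<integral>\<^sup>+ x. g x * indicator B x \<partial>M))) \<and>
        (\<forall>x\<in>D i. c (\<sigma> i x) = x)) \<and>
     emeasure M (space M - (\<Union>i\<in>I. \<sigma> i ` D i)) = 0 \<and>
     (\<forall>i\<in>I. \<forall>j\<in>I. i \<noteq> j \<longrightarrow> emeasure M (\<sigma> i ` D i \<inter> \<sigma> j ` D j) = 0)"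

text \<open>Lambda-semibranching function system {tau_l, T n} (T n is tau^n).\<close>
definition Lambda_sbfs :: "nat \<Rightarrow> 'p kgraph \<Rightarrow> 'x measure \<Rightarrow> ('p \<Rightarrow> 'x set) \<Rightarrow>
    ('p \<Rightarrow> 'x \<Rightarrow> 'x) \<Rightarrow> ((nat \<Rightarrow> nat) \<Rightarrow> 'x \<Rightarrow> 'x) \<Rightarrow> bool" where
  "Lambda_sbfs k G M D \<tau> T \<longleftrightarrow>
     (\<forall>m\<in>Nk k. sbfs M {l\<in>Mor G. deg G l = m} D \<tau> (T m)) \<and>
     (\<forall>m\<in>Nk k. T m \<in> measurable M M) \<and>
     (\<forall>v\<in>Obj G. \<forall>x\<in>D v. \<tau> v x = x) \<and>
     (\<forall>l\<in>Mor G. \<forall>n\<in>Mor G. src G l = rng G n \<longrightarrow>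
        emeasure M (\<tau> n ` D n - D l) = 0 \<and>
        (AE x in M. (x \<in> D (cmp G l n) \<longleftrightarrow> x \<in> D n) \<and>
                    (x \<in> D n \<longrightarrow> \<tau> l (\<tau> n x) = \<tau> (cmp G l n) x))) \<and>
     (\<forall>m\<in>Nk k. \<forall>n\<in>Nk k. \<forall>x\<in>space M. T m (T n x) = T (addk m n) x)"

definition Lambda_projective :: "nat \<Rightarrow> 'p kgraph \<Rightarrow> 'x measure \<Rightarrow> ('p \<Rightarrow> 'x set) \<Rightarrow>
    ('p \<Rightarrow> 'x \<Rightarrow> 'x) \<Rightarrow> ((nat \<Rightarrow> nat) \<Rightarrow> 'x \<Rightarrow> 'x) \<Rightarrow> ('p \<Rightarrow> 'x \<Rightarrow> complex) \<Rightarrow> bool" where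
  "Lambda_projective k G M D \<tau> T f \<longleftrightarrow>
     Lambda_sbfs k G M D \<tau> T \<and>
     (\<forall>l\<in>Mor G. f l \<in> borel_measurable M \<and>
        integrable M (\<lambda>x. (cmod (f l x))\<^sup>2) \<and>
        \<not> (AE x in M. f l x = 0) \<and>
        (\<forall>B\<in>sets M. emeasure M {x \<in> D l. \<tau> l x \<in> B} =
            (\<integral>\<^sup>+ x. ennreal ((cmod (f l x))\<^sup>2) * indicator B x \<partial>M))) \<and>
     (\<forall>l\<in>Mor G. \<forall>n\<in>Mor G. src G l = rng G n \<longrightarrow>
        (AE x in M. f l x * f n (T (deg G l) x) = f (cmp G l n) x))"

definition invariant_set :: "'x measure \<Rightarrow> ('x \<Rightarrow> 'x) \<Rightarrow> 'x set \<Rightarrow> bool" where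
  "invariant_set M T B \<longleftrightarrow> emeasure M (((T -` B \<inter> space M) - B) \<union> (B - (T -` B \<inter> space M))) = 0"

definition restr_measure :: "'x measure \<Rightarrow> 'x set \<Rightarrow> 'x measure" where
  "restr_measure M A = density M (indicator A)"

end

theory Submission imports Defs begin

lemma rm_sets[simp]: "sets (restr_measure M A) = sets M"
  and rm_space[simp]: "space (restr_measure M A) = space M"
  by (simp_all add: restr_measure_def)

lemma rm_meas1[simp]: "measurable (restr_measure M A) X = measurable M X"
  and rm_meas2[simp]: "measurable X (restr_measure M A) = measurable X M"
  by (intro measurable_cong_sets; simp)+

lemma rm_meas_restrict[simp]:
  "measurable (restrict_space (restr_measure M A) S) (restr_measure M A) = measurable (restrict_space M S) M"
  by (intro measurable_cong_sets sets_restrict_space_cong) simp_all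

lemma rm_emeasure: "A \<in> sets M \<Longrightarrow> X \<in> sets M \<Longrightarrow> emeasure (restr_measure M A) X = emeasure M (A \<inter> X)"
  unfolding restr_measure_def by (rule emeasure_restricted)

lemma rm_null: "A \<in> sets M \<Longrightarrow> emeasure M X = 0 \<Longrightarrow> emeasure (restr_measure M A) X = 0"
proof (cases "X \<in> sets M")
  case True
  assume "A \<in> sets M" "emeasure M X = 0"
  moreover have "emeasure M (A \<inter> X) \<le> emeasure M X" using True by (intro emeasure_mono) auto
  ultimately show ?thesis using True by (simp add: rm_emeasure)
next
  case False then show ?thesis by (simp add: emeasure_notin_sets)
qed

lemma rm_AE_iff: "A \<in> sets M \<Longrightarrow> (AE x in restr_measure M A. P x) \<longleftrightarrow> (AE x in M. x \<in> A \<longrightarrow> P x)"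
  unfolding restr_measure_def by (subst AE_density) (auto simp: indicator_def)

lemma rm_AE: "A \<in> sets M \<Longrightarrow> (AE x in M. P x) \<Longrightarrow> (AE x in restr_measure M A. P x)"
  by (simp add: rm_AE_iff) (erule eventually_mono, simp)

lemma rm_nn: "A \<in> sets M \<Longrightarrow> g \<in> borel_measurable M \<Longrightarrow>
   integral\<^sup>N (restr_measure M A) g = (\<integral>\<^sup>+ x. indicator A x * g x \<partial>M)"
  unfolding restr_measure_def by (rule nn_integral_density) auto

lemma sbfs_restr:
  assumes S: "sbfs M I D \<sigma> c" and A: "A \<in> sets M" and c: "c \<in> measurable M M"
    and inv: "emeasure M ((c -` A \<inter> space M - A) \<union> (A - c -` A \<inter> space M)) = 0"
    and pos: "\<forall>i\<in>I. emeasure M (A \<inter> D i) \<noteq> 0"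
  shows "sbfs (restr_measure M A) I D \<sigma> c"
proof -
  let ?E = "(c -` A \<inter> space M - A) \<union> (A - c -` A \<inter> space M)"
  have Es: "?E \<in> sets M" using A c by (intro sets.Un sets.Diff) (auto intro: measurable_sets)
  have AEE: "AE x in M. x \<notin> ?E" using Es inv by (intro AE_not_in) auto
  let ?N = "restr_measure M A"
  have "\<forall>i\<in>I. D i \<in> sets ?N \<and> 0 < emeasure ?N (D i) \<and> emeasure ?N (D i) < \<infinity> \<and>
        \<sigma> i \<in> measurable (restrict_space ?N (D i)) ?N \<and>
        (\<forall>B\<in>sets ?N. B \<subseteq> D i \<longrightarrow> \<sigma> i ` B \<in> sets ?N) \<and>
        emeasure ?N (\<sigma> i ` D i) < \<infinity> \<and>
        (\<exists>g\<in>borel_measurable ?N. (AE x in ?N. x \<in> D i \<longrightarrow> 0 < g x) \<and>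
           (\<forall>B\<in>sets ?N. B \<subseteq> D i \<longrightarrow>
              emeasure ?N (\<sigma> i ` B) = (\<integral>\<^sup>+ x. g x * indicator B x \<partial>?N))) \<and>
        (\<forall>x\<in>D i. c (\<sigma> i x) = x)"
  proof
    fix i assume i: "i \<in> I"
    note Si = S[unfolded sbfs_def, THEN conjunct1, THEN bspec, OF i]
    note Di = Si[THEN conjunct1]
    note fin = Si[THEN conjunct2, THEN conjunct2, THEN conjunct1]
    note sm = Si[THEN conjunct2, THEN conjunct2, THEN conjunct2, THEN conjunct1]
    note img = Si[THEN conjunct2, THEN conjunct2, THEN conjunct2, THEN conjunct2, THEN conjunct1]
    note rfin = Si[THEN conjunct2, THEN conjunct2, THEN conjunct2, THEN conjunct2, THEN conjunct2, THEN conjunct1]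
    note g = Si[THEN conjunct2, THEN conjunct2, THEN conjunct2, THEN conjunct2, THEN conjunct2, THEN conjunct2, THEN conjunct1]
    note cod = Si[THEN conjunct2, THEN conjunct2, THEN conjunct2, THEN conjunct2, THEN conjunct2, THEN conjunct2, THEN conjunct2]
    have spD: "D i \<subseteq> space M" using Di sets.sets_into_space by blast
    have sp: "\<sigma> i x \<in> space M" if "x \<in> D i" for x
      using measurable_space[OF sm] that spD by (auto simp: space_restrict_space)
    have p1: "0 < emeasure ?N (D i)" using pos i A Di by (simp add: rm_emeasure zero_less_iff_neq_zero)
    have p2: "emeasure ?N (D i) < \<infinity>"
    proof -
      have "emeasure M (A \<inter> D i) \<le> emeasure M (D i)" using Di by (intro emeasure_mono) auto
      then show ?thesis using A Di fin by (simp add: rm_emeasure)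
    qed
    have rDs: "\<sigma> i ` D i \<in> sets M" using img Di by blast
    have p3: "emeasure ?N (\<sigma> i ` D i) < \<infinity>"
    proof -
      have "emeasure M (A \<inter> \<sigma> i ` D i) \<le> emeasure M (\<sigma> i ` D i)" using rDs by (intro emeasure_mono) auto
      then show ?thesis using A rDs rfin by (simp add: rm_emeasure)
    qed
    from g obtain g where gm: "g \<in> borel_measurable M" and gpos: "AE x in M. x \<in> D i \<longrightarrow> 0 < g x"
      and geq: "\<forall>B\<in>sets M. B \<subseteq> D i \<longrightarrow> emeasure M (\<sigma> i ` B) = (\<integral>\<^sup>+ x. g x * indicator B x \<partial>M)"
      by blast
    have p4: "\<forall>B\<in>sets M. B \<subseteq> D i \<longrightarrow>
              emeasure ?N (\<sigma> i ` B) = (\<integral>\<^sup>+ x. g x * indicator B x \<partial>?N)"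
    proof (intro ballI impI)
      fix B assume B: "B \<in> sets M" "B \<subseteq> D i"
      hence Bs: "B \<in> sets M" by simp
      have BA: "B \<inter> A \<in> sets M" "B \<inter> A \<subseteq> D i" using Bs A B by auto
      have s1: "\<sigma> i ` B \<in> sets M" using img Bs B by blast
      have s2: "\<sigma> i ` (B \<inter> A) \<in> sets M" using img BA by blast
      have "emeasure ?N (\<sigma> i ` B) = emeasure M (A \<inter> \<sigma> i ` B)" using A s1 by (simp add: rm_emeasure)
      also have "\<dots> = emeasure M (\<sigma> i ` (B \<inter> A))"
      proof (rule emeasure_eq_AE)
        show "AE x in M. (x \<in> A \<inter> \<sigma> i ` B) = (x \<in> \<sigma> i ` (B \<inter> A))"
          using AEE
        proof eventually_elim
          case (elim y)
          show ?case
          proof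
            assume "y \<in> A \<inter> \<sigma> i ` B"
            then obtain x where x: "x \<in> B" "y = \<sigma> i x" "y \<in> A" by auto
            have "y \<in> space M" using sp x B by auto
            then have "c y \<in> A" using elim x by auto
            then show "y \<in> \<sigma> i ` (B \<inter> A)" using x cod B by auto
          next
            assume "y \<in> \<sigma> i ` (B \<inter> A)"
            then obtain x where x: "x \<in> B" "x \<in> A" "y = \<sigma> i x" by auto
            have "y \<in> space M" using sp x B by auto
            moreover have "c y \<in> A" using x cod B by auto
            ultimately show "y \<in> A \<inter> \<sigma> i ` B" using elim x by auto
          qed
        qed
      next
        show "A \<inter> \<sigma> i ` B \<in> sets M" using A s1 by (rule sets.Int)
      next
        show "\<sigma> i ` (B \<inter> A) \<in> sets M" by (rule s2)
      qed
      also have "\<dots> = (\<integral>\<^sup>+ x. g x * indicator (B \<inter> A) x \<partial>M)" using geq BA by blast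
      also have "\<dots> = (\<integral>\<^sup>+ x. indicator A x * (g x * indicator B x) \<partial>M)"
        by (intro nn_integral_cong) (auto simp: indicator_def)
      also have "\<dots> = (\<integral>\<^sup>+ x. g x * indicator B x \<partial>?N)"
        using A gm Bs by (subst rm_nn) auto
      finally show "emeasure ?N (\<sigma> i ` B) = (\<integral>\<^sup>+ x. g x * indicator B x \<partial>?N)" .
    qed
    have p5: "AE x in ?N. x \<in> D i \<longrightarrow> 0 < g x" using rm_AE[OF A gpos] .
    show "D i \<in> sets ?N \<and> 0 < emeasure ?N (D i) \<and> emeasure ?N (D i) < \<infinity> \<and>
        \<sigma> i \<in> measurable (restrict_space ?N (D i)) ?N \<and>
        (\<forall>B\<in>sets ?N. B \<subseteq> D i \<longrightarrow> \<sigma> i ` B \<in> sets ?N) \<and>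
        emeasure ?N (\<sigma> i ` D i) < \<infinity> \<and>
        (\<exists>g\<in>borel_measurable ?N. (AE x in ?N. x \<in> D i \<longrightarrow> 0 < g x) \<and>
           (\<forall>B\<in>sets ?N. B \<subseteq> D i \<longrightarrow>
              emeasure ?N (\<sigma> i ` B) = (\<integral>\<^sup>+ x. g x * indicator B x \<partial>?N))) \<and>
        (\<forall>x\<in>D i. c (\<sigma> i x) = x)"
      unfolding rm_sets rm_meas_restrict rm_meas1
      using Di p1 p2 sm img p3 gm p5 p4 cod by - (intro conjI bexI[of _ g], assumption+)
  qed
  moreover have "emeasure ?N (space ?N - (\<Union>i\<in>I. \<sigma> i ` D i)) = 0"
  proof -
    note S[unfolded sbfs_def, THEN conjunct2, THEN conjunct1]
    then show ?thesis using rm_null[OF A] by simp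
  qed
  moreover have "\<forall>i\<in>I. \<forall>j\<in>I. i \<noteq> j \<longrightarrow> emeasure ?N (\<sigma> i ` D i \<inter> \<sigma> j ` D j) = 0"
  proof (intro ballI impI)
    fix i j assume "i \<in> I" "j \<in> I" "i \<noteq> j"
    then have "emeasure M (\<sigma> i ` D i \<inter> \<sigma> j ` D j) = 0" using S[unfolded sbfs_def, THEN conjunct2, THEN conjunct2] by blast
    then show "emeasure ?N (\<sigma> i ` D i \<inter> \<sigma> j ` D j) = 0" using rm_null[OF A] by simp
  qed
  ultimately show ?thesis by - (unfold sbfs_def, intro conjI, assumption+)
qed


lemma preimage_sets:
  assumes "\<tau> \<in> measurable (restrict_space M Dl) M" "Dl \<in> sets M" "B \<in> sets M"
  shows "{x \<in> Dl. \<tau> x \<in> B} \<in> sets M"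
proof -
  have "\<tau> -` B \<inter> space (restrict_space M Dl) \<in> sets (restrict_space M Dl)"
    using measurable_sets[OF assms(1,3)] .
  moreover have "\<tau> -` B \<inter> space (restrict_space M Dl) = {x \<in> Dl. \<tau> x \<in> B}"
    using assms(2) by (auto simp: space_restrict_space2)
  moreover have "Dl \<inter> space M \<in> sets M" using assms(2) by auto
  ultimately show ?thesis by (simp add: sets_restrict_space_iff)
qed

theorem proposition2p15:
  fixes k :: nat and G :: "'p kgraph" and M :: "'x measure"
    and D :: "'p \<Rightarrow> 'x set" and \<tau> :: "'p \<Rightarrow> 'x \<Rightarrow> 'x" and T :: "(nat \<Rightarrow> nat) \<Rightarrow> 'x \<Rightarrow> 'x"
    and A :: "'x set"
  assumes "is_kgraph k G" and "row_finite k G" and "source_free k G"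
    and "Lambda_sbfs k G M D \<tau> T"
    and "A \<in> sets M"
    and "\<forall>n\<in>Nk k. invariant_set M (T n) A"
    and "\<forall>v\<in>Obj G. emeasure M (A \<inter> D v) \<noteq> 0"
  shows "Lambda_sbfs k G (restr_measure M A) D \<tau> T \<and>
    (\<forall>f. Lambda_projective k G M D \<tau> T f \<longrightarrow>
       Lambda_projective k G (restr_measure M A) D \<tau> T (\<lambda>l x. if x \<in> A then f l x else 0))"
proof -
  note KG = assms(1)[unfolded is_kgraph_def]
  note ObjMor = KG[THEN conjunct2, THEN conjunct1]
  have srcObj: "\<And>l. l \<in> Mor G \<Longrightarrow> src G l \<in> Obj G" using KG[THEN conjunct2, THEN conjunct2, THEN conjunct1] by blast
  have rngObj: "\<And>v. v \<in> Obj G \<Longrightarrow> rng G v = v" using KG[THEN conjunct2, THEN conjunct2, THEN conjunct2, THEN conjunct1] by blast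
  have degNk: "\<And>l. l \<in> Mor G \<Longrightarrow> deg G l \<in> Nk k" using KG[THEN conjunct2, THEN conjunct2, THEN conjunct2, THEN conjunct2, THEN conjunct2, THEN conjunct2, THEN conjunct2, THEN conjunct1] by blast
  note LS = assms(4)[unfolded Lambda_sbfs_def]
  note sb = LS[THEN conjunct1]
  note Tmeas = LS[THEN conjunct2, THEN conjunct1]
  note tid = LS[THEN conjunct2, THEN conjunct2, THEN conjunct1]
  note comp = LS[THEN conjunct2, THEN conjunct2, THEN conjunct2, THEN conjunct1]
  note Tadd = LS[THEN conjunct2, THEN conjunct2, THEN conjunct2, THEN conjunct2]
  have A: "A \<in> sets M" by fact
  define E where "E m = (T m -` A \<inter> space M - A) \<union> (A - T m -` A \<inter> space M)" for m
  have Es: "E m \<in> sets M" if "m \<in> Nk k" for m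
    using A Tmeas that unfolding E_def by (intro sets.Un sets.Diff) (auto intro: measurable_sets)
  have E0: "emeasure M (E m) = 0" if "m \<in> Nk k" for m
    using assms(6) that unfolding E_def invariant_set_def by blast
  have Enull: "E m \<in> null_sets M" if "m \<in> Nk k" for m using Es E0 that by blast
  have sbl: "sbfs M {l'\<in>Mor G. deg G l' = deg G l} D \<tau> (T (deg G l))" if "l \<in> Mor G" for l
    using sb degNk that by blast
  have Si: "D l \<in> sets M \<and> 0 < emeasure M (D l) \<and> emeasure M (D l) < \<infinity> \<and>
        \<tau> l \<in> measurable (restrict_space M (D l)) M \<and>
        (\<forall>B\<in>sets M. B \<subseteq> D l \<longrightarrow> \<tau> l ` B \<in> sets M) \<and>
        emeasure M (\<tau> l ` D l) < \<infinity> \<and>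
        (\<exists>g\<in>borel_measurable M. (AE x in M. x \<in> D l \<longrightarrow> 0 < g x) \<and>
           (\<forall>B\<in>sets M. B \<subseteq> D l \<longrightarrow>
              emeasure M (\<tau> l ` B) = (\<integral>\<^sup>+ x. g x * indicator B x \<partial>M))) \<and>
        (\<forall>x\<in>D l. T (deg G l) (\<tau> l x) = x)" if l: "l \<in> Mor G" for l
  proof -
    have mem: "l \<in> {l'\<in>Mor G. deg G l' = deg G l}" using l by simp
    show ?thesis using mem sbl[OF l, unfolded sbfs_def, THEN conjunct1] by (rule bspec[rotated])
  qed
  have Dls: "D l \<in> sets M" if "l \<in> Mor G" for l using Si[OF that, THEN conjunct1] .
  have tlm: "\<tau> l \<in> measurable (restrict_space M (D l)) M" if "l \<in> Mor G" for l using Si[OF that, THEN conjunct2, THEN conjunct2, THEN conjunct2, THEN conjunct1] .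
  have cod: "T (deg G l) (\<tau> l x) = x" if "l \<in> Mor G" "x \<in> D l" for l x using Si[OF that(1), THEN conjunct2, THEN conjunct2, THEN conjunct2, THEN conjunct2, THEN conjunct2, THEN conjunct2, THEN conjunct2] that(2) by (rule bspec)
  have tsp: "\<tau> l x \<in> space M" if "l \<in> Mor G" "x \<in> D l" for l x
    using measurable_space[OF tlm[OF that(1)]] that Dls[OF that(1)] by (auto simp: space_restrict_space2)
  have key: "x \<in> A \<longleftrightarrow> \<tau> l x \<in> A" if "l \<in> Mor G" "x \<in> D l" "\<tau> l x \<notin> E (deg G l)" for l x
    using that tsp[OF that(1,2)] cod[OF that(1,2)] unfolding E_def by auto
  have posl: "emeasure M (A \<inter> D l) \<noteq> 0" if l: "l \<in> Mor G" for l
  proof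
    assume z: "emeasure M (A \<inter> D l) = 0"
    define v where "v = src G l"
    have v: "v \<in> Obj G" "v \<in> Mor G" using srcObj[OF l] ObjMor unfolding v_def by auto
    have "src G l = rng G v" using rngObj[OF v(1)] v_def by simp
    then have "emeasure M (\<tau> v ` D v - D l) = 0" using comp l v(2) by blast
    moreover have "\<tau> v ` D v = D v" using tid v(1) by force
    ultimately have z2: "emeasure M (D v - D l) = 0" by simp
    have "emeasure M (A \<inter> D v) \<le> emeasure M ((A \<inter> D l) \<union> (D v - D l))"
      using A Dls[OF l] Dls[OF v(2)] by (intro emeasure_mono) auto
    also have "\<dots> \<le> emeasure M (A \<inter> D l) + emeasure M (D v - D l)"
      using A Dls[OF l] Dls[OF v(2)] by (intro emeasure_subadditive) auto
    finally have "emeasure M (A \<inter> D v) = 0" using z z2 by simp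
    then show False using assms(7) v(1) by blast
  qed
  have part1: "Lambda_sbfs k G (restr_measure M A) D \<tau> T"
    unfolding Lambda_sbfs_def
  proof (intro conjI)
    show "\<forall>m\<in>Nk k. sbfs (restr_measure M A) {l \<in> Mor G. deg G l = m} D \<tau> (T m)"
    proof
      fix m assume m: "m \<in> Nk k"
      show "sbfs (restr_measure M A) {l \<in> Mor G. deg G l = m} D \<tau> (T m)"
        using sbfs_restr[OF sb[rule_format, OF m] A Tmeas[rule_format, OF m]] E0[OF m] posl
        unfolding E_def by blast
    qed
    show "\<forall>m\<in>Nk k. T m \<in> restr_measure M A \<rightarrow>\<^sub>M restr_measure M A" using Tmeas by simp
    show "\<forall>v\<in>Obj G. \<forall>x\<in>D v. \<tau> v x = x" by (rule tid)
    show "\<forall>l\<in>Mor G. \<forall>n\<in>Mor G. src G l = rng G n \<longrightarrow>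
        emeasure (restr_measure M A) (\<tau> n ` D n - D l) = 0 \<and>
        (AE x in restr_measure M A. (x \<in> D (cmp G l n) \<longleftrightarrow> x \<in> D n) \<and>
                    (x \<in> D n \<longrightarrow> \<tau> l (\<tau> n x) = \<tau> (cmp G l n) x))"
    proof (intro ballI impI)
      fix l n assume ln: "l \<in> Mor G" "n \<in> Mor G" "src G l = rng G n"
      have c: "emeasure M (\<tau> n ` D n - D l) = 0 \<and>
        (AE x in M. (x \<in> D (cmp G l n) \<longleftrightarrow> x \<in> D n) \<and>
                    (x \<in> D n \<longrightarrow> \<tau> l (\<tau> n x) = \<tau> (cmp G l n) x))"
        using comp ln by blast
      show "emeasure (restr_measure M A) (\<tau> n ` D n - D l) = 0 \<and>
        (AE x in restr_measure M A. (x \<in> D (cmp G l n) \<longleftrightarrow> x \<in> D n) \<and>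
                    (x \<in> D n \<longrightarrow> \<tau> l (\<tau> n x) = \<tau> (cmp G l n) x))"
        using rm_null[OF A c[THEN conjunct1]] rm_AE[OF A c[THEN conjunct2]] by (rule conjI)
    qed
    show "\<forall>m\<in>Nk k. \<forall>n\<in>Nk k. \<forall>x\<in>space (restr_measure M A). T m (T n x) = T (addk m n) x"
      using Tadd by simp
  qed
  have part2: "Lambda_projective k G (restr_measure M A) D \<tau> T (\<lambda>l x. if x \<in> A then f l x else 0)"
    if P: "Lambda_projective k G M D \<tau> T f" for f
  proof -
    let ?N = "restr_measure M A"
    let ?f = "\<lambda>l x. if x \<in> A then f l x else 0"
    note P1 = P[unfolded Lambda_projective_def, THEN conjunct2, THEN conjunct1]
    note P2 = P[unfolded Lambda_projective_def, THEN conjunct2, THEN conjunct2]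
    have fm: "f l \<in> borel_measurable M" if "l \<in> Mor G" for l using P1 that by blast
    have fint: "integrable M (\<lambda>x. (cmod (f l x))\<^sup>2)" if "l \<in> Mor G" for l using P1 that by blast
    have fnz: "\<not> (AE x in M. f l x = 0)" if "l \<in> Mor G" for l using P1 that by blast
    have frn: "\<forall>B\<in>sets M. emeasure M {x \<in> D l. \<tau> l x \<in> B} =
            (\<integral>\<^sup>+ x. ennreal ((cmod (f l x))\<^sup>2) * indicator B x \<partial>M)" if "l \<in> Mor G" for l
      using P1 that by blast
    have pre: "{x \<in> D l. \<tau> l x \<in> B} \<in> sets M" if "l \<in> Mor G" "B \<in> sets M" for l B
      using preimage_sets[OF tlm[OF that(1)] Dls[OF that(1)] that(2)] .
    define Pn where "Pn l = {x \<in> D l. \<tau> l x \<in> E (deg G l)}" for l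
    have Pns: "Pn l \<in> sets M" if "l \<in> Mor G" for l
      unfolding Pn_def using pre[OF that Es[OF degNk[OF that]]] .
    have Pn0: "emeasure M (Pn l) = 0" if l: "l \<in> Mor G" for l
    proof -
      have "emeasure M (Pn l) = (\<integral>\<^sup>+ x. ennreal ((cmod (f l x))\<^sup>2) * indicator (E (deg G l)) x \<partial>M)"
        unfolding Pn_def using frn[OF l] Es[OF degNk[OF l]] by blast
      also have "\<dots> = 0" using nn_integral_null_set[OF Enull[OF degNk[OF l]]] .
      finally show ?thesis .
    qed
    have AEP: "AE x in M. x \<notin> Pn l" if "l \<in> Mor G" for l
      using Pns[OF that] Pn0[OF that] by (intro AE_not_in) auto
    show ?thesis
      unfolding Lambda_projective_def
    proof (intro conjI ballI impI)
      show "Lambda_sbfs k G ?N D \<tau> T" by (rule part1)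
    next
      fix l assume l: "l \<in> Mor G"
      have fm': "?f l \<in> borel_measurable M"
        using fm[OF l] A by measurable
      then show "?f l \<in> borel_measurable ?N" by simp
    next
      fix l assume l: "l \<in> Mor G"
      have fm': "?f l \<in> borel_measurable M"
        using fm[OF l] A by measurable
      have hm: "(\<lambda>x. (cmod (?f l x))\<^sup>2) \<in> borel_measurable M" using fm' by measurable
      have "(\<integral>\<^sup>+ x. ennreal (norm ((cmod (?f l x))\<^sup>2)) \<partial>?N)
          = (\<integral>\<^sup>+ x. indicator A x * ennreal (norm ((cmod (?f l x))\<^sup>2)) \<partial>M)"
        using A hm by (subst rm_nn) auto
      also have "\<dots> \<le> (\<integral>\<^sup>+ x. ennreal (norm ((cmod (f l x))\<^sup>2)) \<partial>M)"
        by (intro nn_integral_mono) (auto simp: indicator_def)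
      also have "\<dots> < \<infinity>" using fint[OF l] by (simp add: integrable_iff_bounded)
      finally show "integrable ?N (\<lambda>x. (cmod (?f l x))\<^sup>2)"
        using hm by (simp add: integrable_iff_bounded)
    next
      fix l assume l: "l \<in> Mor G"
      show "\<not> (AE x in ?N. ?f l x = 0)"
      proof
        assume "AE x in ?N. ?f l x = 0"
        then have ae: "AE x in M. x \<in> A \<longrightarrow> f l x = 0" by (simp add: rm_AE_iff[OF A])
        have "emeasure M {x \<in> D l. \<tau> l x \<in> A} = (\<integral>\<^sup>+ x. ennreal ((cmod (f l x))\<^sup>2) * indicator A x \<partial>M)"
          using frn[OF l] A by blast
        also have "\<dots> = (\<integral>\<^sup>+ x. 0 \<partial>M)"
          using ae by (intro nn_integral_cong_AE) (auto simp: indicator_def elim!: eventually_mono)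
        finally have z1: "emeasure M {x \<in> D l. \<tau> l x \<in> A} = 0" by simp
        have "A \<inter> D l \<subseteq> {x \<in> D l. \<tau> l x \<in> A} \<union> Pn l"
          using key[OF l] unfolding Pn_def by blast
        then have "emeasure M (A \<inter> D l) \<le> emeasure M ({x \<in> D l. \<tau> l x \<in> A} \<union> Pn l)"
          using pre[OF l A] Pns[OF l] by (intro emeasure_mono) auto
        also have "\<dots> \<le> emeasure M {x \<in> D l. \<tau> l x \<in> A} + emeasure M (Pn l)"
          using pre[OF l A] Pns[OF l] by (intro emeasure_subadditive)
        finally have "emeasure M (A \<inter> D l) = 0" using z1 Pn0[OF l] by simp
        then show False using posl[OF l] by blast
      qed
    next
      fix l B assume l: "l \<in> Mor G" and B: "B \<in> sets ?N"
      then have Bs: "B \<in> sets M" by simp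
      have fm': "?f l \<in> borel_measurable M"
        using fm[OF l] A by measurable
      have "emeasure ?N {x \<in> D l. \<tau> l x \<in> B} = emeasure M (A \<inter> {x \<in> D l. \<tau> l x \<in> B})"
        using A pre[OF l Bs] by (simp add: rm_emeasure)
      also have "\<dots> = emeasure M {x \<in> D l. \<tau> l x \<in> B \<inter> A}"
      proof (rule emeasure_eq_AE)
        show "AE x in M. (x \<in> A \<inter> {x \<in> D l. \<tau> l x \<in> B}) = (x \<in> {x \<in> D l. \<tau> l x \<in> B \<inter> A})"
          using AEP[OF l]
        proof eventually_elim
          case (elim x)
          then show ?case using key[OF l, of x] unfolding Pn_def by blast
        qed
        show "A \<inter> {x \<in> D l. \<tau> l x \<in> B} \<in> sets M" using A pre[OF l Bs] by (rule sets.Int)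
        show "{x \<in> D l. \<tau> l x \<in> B \<inter> A} \<in> sets M" using pre[OF l sets.Int[OF Bs A]] .
      qed
      also have "\<dots> = (\<integral>\<^sup>+ x. ennreal ((cmod (f l x))\<^sup>2) * indicator (B \<inter> A) x \<partial>M)"
        using frn[OF l] sets.Int[OF Bs A] by blast
      also have "\<dots> = (\<integral>\<^sup>+ x. indicator A x * (ennreal ((cmod (?f l x))\<^sup>2) * indicator B x) \<partial>M)"
        by (intro nn_integral_cong) (auto simp: indicator_def)
      also have "\<dots> = (\<integral>\<^sup>+ x. ennreal ((cmod (?f l x))\<^sup>2) * indicator B x \<partial>?N)"
        using A fm' Bs by (subst rm_nn) auto
      finally show "emeasure ?N {x \<in> D l. \<tau> l x \<in> B} =
          (\<integral>\<^sup>+ x. ennreal ((cmod (?f l x))\<^sup>2) * indicator B x \<partial>?N)" .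
    next
      fix l n assume l: "l \<in> Mor G" and n: "n \<in> Mor G" and ln: "src G l = rng G n"
      have ae1: "AE x in M. f l x * f n (T (deg G l) x) = f (cmp G l n) x"
        using P2 l n ln by blast
      have ae2: "AE x in M. x \<notin> E (deg G l)"
        using Enull[OF degNk[OF l]] by (rule AE_not_in)
      have "AE x in M. x \<in> A \<longrightarrow> ?f l x * ?f n (T (deg G l) x) = ?f (cmp G l n) x"
        using ae1 ae2 AE_space
      proof eventually_elim
        case (elim x)
        then show ?case unfolding E_def by auto
      qed
      then show "AE x in ?N. ?f l x * ?f n (T (deg G l) x) = ?f (cmp G l n) x"
        by (simp add: rm_AE_iff[OF A])
    qed
  qed
  show ?thesis using part1 part2 by blast
qed

end
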